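(* Let $(X,\mu)$ and $(Y,\nu)$ be $\sigma$-finite measure spaces and let $\tau:Y\to X$ be a measurable map which is nonsingular, i.e. $\nu(\tau^{-1}(E))=0$ for every $\mu$-null set $E\subset X$. Let $0<p<\infty$ and let $\Phi:[0,\infty)\to[0,\infty)$ be a Young function. Then the composition operator $C_\tau f=f\circ\tau$ is bounded from $L^{p,1}(X,\mu)$ to $L^\Phi(Y,\nu)$ (i.e. there is $C>0$ with $\|C_\tau f\|_{L^\Phi(Y)}\le C\|f\|_{L^{p,1}(X)}$ for all $f\in L^{p,1}(X,\mu)$) if and only if there exists a constant $D\ge1$ such that for all $\mu$-measurable sets $E\subset X$, \[ \nu(\tau^{-1}(E))\le\left\{\Phi\left(\frac{1}{D\mu(E)^{1/p}}\right)\right\}^{-1}. \]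
   Context: A Young function is a map $\Phi:[0,\infty)\to[0,\infty)$ that is positive on $(0,\infty)$, convex, and satisfies $\lim_{t\downarrow0}\Phi(t)=\Phi(0)=0$. For a measurable $f$ on $X$, the composition operator is $C_\tau f(y)=f(\tau(y))$, $y\in Y$. The Orlicz space $L^\Phi(Y,\nu)$ consists of measurable $g$ on $Y$ with $\int_Y\Phi(\epsilon|g|)\,d\nu<\infty$ for every $\epsilon>0$, with (quasi-)norm $\|g\|_{L^\Phi(Y)}=\inf\{\lambda>0:\int_Y\Phi(|g(y)|/\lambda)\,d\nu(y)\le1\}$. The Lorentz space $L^{p,1}(X,\mu)$ consists of measurable $f$ on $X$ with $\|f\|_{L^{p,1}(X)}=\int_0^\infty \mu(\{x\in X:|f(x)|>t\})^{1/p}\,dt<\infty$. In the volume condition the usual conventions $1/0=\infty$, $\Phi(\infty)=\infty$, $1/\infty=0$ are used when $\mu(E)\in\{0,\infty\}$. *)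

theory Defs
  imports "HOL-Analysis.Analysis"
begin

definition enn_powr :: "ennreal \<Rightarrow> real \<Rightarrow> ennreal" where
  "enn_powr m a = (if m = top then top else ennreal (enn2real m powr a))"

definition young_function :: "(real \<Rightarrow> real) \<Rightarrow> bool" where
  "young_function \<Phi> \<longleftrightarrow>
     (\<forall>t\<ge>0. 0 \<le> \<Phi> t) \<and> (\<forall>t>0. 0 < \<Phi> t) \<and> convex_on {0..} \<Phi> \<and>
     \<Phi> 0 = 0 \<and> (\<Phi> \<longlongrightarrow> 0) (at_right 0)"

definition lorentz_norm :: "'a measure \<Rightarrow> real \<Rightarrow> ('a \<Rightarrow> real) \<Rightarrow> ennreal" where
  "lorentz_norm M p f =
     (\<integral>\<^sup>+ t. indicator {0<..} t *
        enn_powr (emeasure M {x \<in> space M. t < \<bar>f x\<bar>}) (1 / p) \<partial>lborel)"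

definition lorentz_space :: "'a measure \<Rightarrow> real \<Rightarrow> ('a \<Rightarrow> real) set" where
  "lorentz_space M p = {f \<in> borel_measurable M. lorentz_norm M p f < top}"

text \<open>Orlicz space and Luxemburg norm (value top if no admissible lambda).\<close>
definition orlicz_space :: "'b measure \<Rightarrow> (real \<Rightarrow> real) \<Rightarrow> ('b \<Rightarrow> real) set" where
  "orlicz_space N \<Phi> = {g \<in> borel_measurable N.
      \<forall>\<epsilon>>0. (\<integral>\<^sup>+ y. ennreal (\<Phi> (\<epsilon> * \<bar>g y\<bar>)) \<partial>N) < top}"

definition orlicz_norm :: "'b measure \<Rightarrow> (real \<Rightarrow> real) \<Rightarrow> ('b \<Rightarrow> real) \<Rightarrow> ennreal" where
  "orlicz_norm N \<Phi> g = Inf {ennreal lam | lam. 0 < lam \<and>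
      (\<integral>\<^sup>+ y. ennreal (\<Phi> (\<bar>g y\<bar> / lam)) \<partial>N) \<le> 1}"

text \<open>The right-hand side of the volume condition, { Phi(1/(D m^(1/p))) }^(-1), with the
  conventions 1/0 = infinity, Phi(infinity) = infinity, 1/infinity = 0:
  m = 0 gives 0, m = infinity gives infinity.\<close>
definition volume_bound :: "(real \<Rightarrow> real) \<Rightarrow> real \<Rightarrow> real \<Rightarrow> ennreal \<Rightarrow> ennreal" where
  "volume_bound \<Phi> D p m =
     (if m = 0 then 0
      else if m = top then top
      else ennreal (1 / \<Phi> (1 / (D * enn2real m powr (1 / p)))))"

end

theory Submission
  imports Defs "HOL-Probability.Probability_Measure"
begin

lemma young_nonneg: "young_function \<Phi> \<Longrightarrow> 0 \<le> t \<Longrightarrow> 0 \<le> \<Phi> t"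
  unfolding young_function_def by auto
lemma young_pos: "young_function \<Phi> \<Longrightarrow> 0 < t \<Longrightarrow> 0 < \<Phi> t"
  unfolding young_function_def by auto
lemma young_zero: "young_function \<Phi> \<Longrightarrow> \<Phi> 0 = 0"
  unfolding young_function_def by auto
lemma young_convex: "young_function \<Phi> \<Longrightarrow> convex_on {0..} \<Phi>"
  unfolding young_function_def by auto

lemma young_scale:
  assumes Y: "young_function \<Phi>" and "0 \<le> u" "u \<le> 1" "0 \<le> t"
  shows "\<Phi> (u * t) \<le> u * \<Phi> t"
proof -
  have "\<Phi> ((1 - u) *\<^sub>R 0 + u *\<^sub>R t) \<le> (1 - u) * \<Phi> 0 + u * \<Phi> t"
    using young_convex[OF Y] assms by (intro convex_onD) auto
  then show ?thesis using young_zero[OF Y] by simp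
qed

lemma young_mono:
  assumes Y: "young_function \<Phi>" and "0 \<le> s" "s \<le> t"
  shows "\<Phi> s \<le> \<Phi> t"
proof (cases "t = 0")
  case True then show ?thesis using assms by simp
next
  case False
  then have t: "t > 0" using assms by simp
  have "\<Phi> ((s/t) * t) \<le> (s/t) * \<Phi> t"
    using assms t by (intro young_scale) auto
  also have "\<dots> \<le> \<Phi> t" using assms t young_nonneg[OF Y, of t]
    by (intro mult_left_le_one_le) auto
  finally show ?thesis using t by simp
qed

lemma young_subgrad:
  assumes Y: "young_function \<Phi>" and m: "0 \<le> m"
  shows "\<exists>c. \<forall>y\<ge>0. \<Phi> m + c * (y - m) \<le> \<Phi> y"
proof (cases "m = 0")
  case True
  then show ?thesis using young_zero[OF Y] young_nonneg[OF Y] by (intro exI[of _ 0]) auto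
next
  case False
  then have "m \<in> interior {0..}" using m by auto
  then show ?thesis
    using convex_le_Inf_differential[OF young_convex[OF Y]] by auto
qed

lemma young_measurable: "young_function \<Phi> \<Longrightarrow> (\<lambda>x. \<Phi> (max 0 x)) \<in> borel_measurable borel"
  by (rule borel_measurable_mono) (auto simp: mono_def intro: young_mono)

lemma young_meas_comp:
  assumes Y: "young_function \<Phi>" and X: "X \<in> borel_measurable P" and nn: "\<forall>x\<in>space P. 0 \<le> X x"
  shows "(\<lambda>x. \<Phi> (X x)) \<in> borel_measurable P"
proof -
  have "(\<lambda>x. \<Phi> (max 0 (X x))) \<in> borel_measurable P"
    using measurable_compose[OF X young_measurable[OF Y]] by simp
  then show ?thesis
    by (rule measurable_cong[THEN iffD1, rotated]) (use nn in auto)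
qed

lemma young_jensen:
  assumes Y: "young_function \<Phi>" and P: "prob_space P"
    and X: "X \<in> borel_measurable P" and nn: "\<forall>x\<in>space P. 0 \<le> X x"
    and I: "(\<integral>\<^sup>+x. ennreal (X x) \<partial>P) = ennreal m" and m: "0 \<le> m"
  shows "ennreal (\<Phi> m) \<le> (\<integral>\<^sup>+x. ennreal (\<Phi> (X x)) \<partial>P)"
proof -
  interpret prob_space P by fact
  have intX: "integrable P X"
    using X nn I by (intro integrableI_nn_integral_finite[where x=m]) auto
  have EX: "expectation X = m"
    using integral_eq_nn_integral[OF X] nn I m by auto
  obtain c where c: "\<And>y. y \<ge> 0 \<Longrightarrow> \<Phi> m + c * (y - m) \<le> \<Phi> y"
    using young_subgrad[OF Y m] by auto
  have PX: "(\<lambda>x. \<Phi> (X x)) \<in> borel_measurable P"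
    by (rule young_meas_comp[OF Y X nn])
  show ?thesis
  proof (cases "(\<integral>\<^sup>+x. ennreal (\<Phi> (X x)) \<partial>P) = \<infinity>")
    case True then show ?thesis by simp
  next
    case False
    then obtain r where r: "(\<integral>\<^sup>+x. ennreal (\<Phi> (X x)) \<partial>P) = ennreal r" "0 \<le> r"
      by (cases "(\<integral>\<^sup>+x. ennreal (\<Phi> (X x)) \<partial>P)") auto
    have intP: "integrable P (\<lambda>x. \<Phi> (X x))"
      using PX nn r young_nonneg[OF Y] by (intro integrableI_nn_integral_finite[where x=r]) auto
    have "\<Phi> m = expectation (\<lambda>x. \<Phi> m + c * (X x - m))"
      using intX EX prob_space by (simp add: algebra_simps)
    also have "\<dots> \<le> expectation (\<lambda>x. \<Phi> (X x))"
      using intX intP nn c by (intro integral_mono) auto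
    finally have le: "\<Phi> m \<le> expectation (\<lambda>x. \<Phi> (X x))" .
    have "(\<integral>\<^sup>+x. ennreal (\<Phi> (X x)) \<partial>P) = ennreal (expectation (\<lambda>x. \<Phi> (X x)))"
      using intP nn young_nonneg[OF Y] by (intro nn_integral_eq_integral) auto
    then show ?thesis using le by (simp add: ennreal_leI)
  qed
qed

lemma meas_level_emeasure:
  fixes g :: "'b \<Rightarrow> real"
  assumes N: "sigma_finite_measure N" and g[measurable]: "g \<in> borel_measurable N"
  shows "(\<lambda>t. emeasure N {y\<in>space N. t < \<bar>g y\<bar>}) \<in> borel_measurable borel"
proof -
  interpret sigma_finite_measure N by fact
  let ?Q = "{z \<in> space ((borel :: real measure) \<Otimes>\<^sub>M N). fst z < \<bar>g (snd z)\<bar>}"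
  have f1: "fst \<in> borel_measurable ((borel :: real measure) \<Otimes>\<^sub>M N)" by (rule measurable_fst)
  have gs[measurable]: "(\<lambda>z. g (snd z)) \<in> borel_measurable ((borel :: real measure) \<Otimes>\<^sub>M N)"
    using measurable_compose[OF measurable_snd[of "borel :: real measure" N] g] .
  have f2: "(\<lambda>z. \<bar>g (snd z)\<bar>) \<in> borel_measurable ((borel :: real measure) \<Otimes>\<^sub>M N)"
    by measurable
  have Q: "?Q \<in> sets ((borel :: real measure) \<Otimes>\<^sub>M N)"
    using borel_measurable_less[OF f1 f2] by (simp add: pred_def)
  have "(\<lambda>t. emeasure N (Pair t -` ?Q)) \<in> borel_measurable borel"
    by (rule measurable_emeasure_Pair[OF Q])
  moreover have "\<And>t. Pair t -` ?Q = {y\<in>space N. t < \<bar>g y\<bar>}"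
    by (auto simp: space_pair_measure)
  ultimately show ?thesis by simp
qed

lemma lemma_G:
  fixes g :: "'b \<Rightarrow> real" and w :: "real \<Rightarrow> real"
  assumes Y: "young_function \<Phi>" and N: "sigma_finite_measure N"
    and g[measurable]: "g \<in> borel_measurable N" and eps: "0 < \<epsilon>"
    and w[measurable]: "w \<in> borel_measurable borel" and wnn: "\<And>t. 0 \<le> w t"
    and w1: "(\<integral>\<^sup>+t. ennreal (indicator {0<..} t * w t) \<partial>lborel) = 1"
    and AEw: "AE y in N. \<forall>t>0. t < \<bar>g y\<bar> \<longrightarrow> 0 < w t"
  shows "(\<integral>\<^sup>+y. ennreal (\<Phi> (\<epsilon> * \<bar>g y\<bar>)) \<partial>N)
     \<le> (\<integral>\<^sup>+t. ennreal (indicator {0<..} t * w t) *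
            (emeasure N {y\<in>space N. t < \<bar>g y\<bar>} * ennreal (\<Phi> (\<epsilon> / w t))) \<partial>lborel)"
proof -
  interpret N: sigma_finite_measure N by fact
  define \<Psi> where "\<Psi> x = \<Phi> (max 0 x)" for x
  have Psi[measurable]: "\<Psi> \<in> borel_measurable borel"
    unfolding \<Psi>_def by (rule young_measurable[OF Y])
  have PsiE: "\<Psi> x = \<Phi> x" if "0 \<le> x" for x using that by (simp add: \<Psi>_def)
  define d where "d t = ennreal (indicator {0<..} t * w t)" for t
  have d[measurable]: "d \<in> borel_measurable borel" unfolding d_def by measurable
  define P where "P = density lborel d"
  have sP: "sets P = sets borel" and spP: "space P = UNIV" by (simp_all add: P_def)
  have prob: "prob_space P"
  proof
    have "emeasure P (space P) = (\<integral>\<^sup>+t. d t * indicator UNIV t \<partial>lborel)"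
      unfolding P_def by (subst emeasure_density) auto
    also have "\<dots> = 1" using w1 by (simp add: d_def)
    finally show "emeasure P (space P) = 1" .
  qed
  interpret P: prob_space P by fact
  interpret PN: pair_sigma_finite P N
    by (intro pair_sigma_finite.intro P.sigma_finite_measure_axioms N.sigma_finite_measure_axioms)
  define \<phi> where "\<phi> y t = (if t < \<bar>g y\<bar> then \<epsilon> / w t else 0)" for y t
  have phinn: "0 \<le> \<phi> y t" for y t using eps wnn[of t] by (simp add: \<phi>_def)
  have jen: "ennreal (\<Phi> (\<epsilon> * \<bar>g y\<bar>)) \<le> (\<integral>\<^sup>+t. ennreal (\<Phi> (\<phi> y t)) \<partial>P)"
    if hy: "\<forall>t>0. t < \<bar>g y\<bar> \<longrightarrow> 0 < w t" for y
  proof (rule young_jensen[OF Y prob])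
    show "(\<lambda>t. \<phi> y t) \<in> borel_measurable P"
      unfolding \<phi>_def by (simp add: measurable_cong_sets[OF sP refl])
    show "\<forall>x\<in>space P. 0 \<le> \<phi> y x" using phinn by auto
    show "0 \<le> \<epsilon> * \<bar>g y\<bar>" using eps by simp
    have "(\<integral>\<^sup>+t. ennreal (\<phi> y t) \<partial>P) = (\<integral>\<^sup>+t. d t * ennreal (\<phi> y t) \<partial>lborel)"
      unfolding P_def by (rule nn_integral_density) (auto simp: \<phi>_def)
    also have "\<dots> = (\<integral>\<^sup>+t. ennreal \<epsilon> * indicator {0<..<\<bar>g y\<bar>} t \<partial>lborel)"
    proof (rule nn_integral_cong)
      fix t :: real
      show "d t * ennreal (\<phi> y t) = ennreal \<epsilon> * indicator {0<..<\<bar>g y\<bar>} t"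
      proof (cases "0 < t \<and> t < \<bar>g y\<bar>")
        case True
        then have "0 < w t" using hy by auto
        then show ?thesis using True eps
          by (simp add: d_def \<phi>_def ennreal_mult''[symmetric] indicator_def)
      next
        case False
        then show ?thesis by (auto simp: d_def \<phi>_def indicator_def)
      qed
    qed
    also have "\<dots> = ennreal (\<epsilon> * \<bar>g y\<bar>)"
      using eps by (simp add: nn_integral_cmult_indicator ennreal_mult)
    finally show "(\<integral>\<^sup>+t. ennreal (\<phi> y t) \<partial>P) = ennreal (\<epsilon> * \<bar>g y\<bar>)" .
  qed
  have "(\<integral>\<^sup>+y. ennreal (\<Phi> (\<epsilon> * \<bar>g y\<bar>)) \<partial>N) \<le> (\<integral>\<^sup>+y. (\<integral>\<^sup>+t. ennreal (\<Phi> (\<phi> y t)) \<partial>P) \<partial>N)"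
    using AEw by (intro nn_integral_mono_AE) (auto elim!: eventually_mono intro: jen)
  also have "\<dots> = (\<integral>\<^sup>+y. (\<integral>\<^sup>+t. ennreal (\<Psi> (\<phi> y t)) \<partial>P) \<partial>N)"
    using phinn by (simp add: PsiE)
  also have "\<dots> = (\<integral>\<^sup>+t. (\<integral>\<^sup>+y. ennreal (\<Psi> (\<phi> y t)) \<partial>N) \<partial>P)"
  proof (rule PN.Fubini')
    have "(\<lambda>z. ennreal (\<Psi> (\<phi> (snd z) (fst z)))) \<in> borel_measurable (borel \<Otimes>\<^sub>M N)"
      unfolding \<phi>_def by measurable
    then show "(\<lambda>(t, y). ennreal (\<Psi> (\<phi> y t))) \<in> borel_measurable (P \<Otimes>\<^sub>M N)"
      by (simp add: case_prod_beta measurable_cong_sets[OF sets_pair_measure_cong[OF sP refl] refl])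
  qed
  also have "\<dots> = (\<integral>\<^sup>+t. emeasure N {y\<in>space N. t < \<bar>g y\<bar>} * ennreal (\<Phi> (\<epsilon> / w t)) \<partial>P)"
  proof (rule nn_integral_cong)
    fix t
    have "(\<integral>\<^sup>+y. ennreal (\<Psi> (\<phi> y t)) \<partial>N)
        = (\<integral>\<^sup>+y. ennreal (\<Phi> (\<epsilon> / w t)) * indicator {y\<in>space N. t < \<bar>g y\<bar>} y \<partial>N)"
      using young_zero[OF Y] eps wnn[of t] by (intro nn_integral_cong) (auto simp: \<phi>_def \<Psi>_def indicator_def max_def)
    also have "\<dots> = ennreal (\<Phi> (\<epsilon> / w t)) * emeasure N {y\<in>space N. t < \<bar>g y\<bar>}"
      by (rule nn_integral_cmult_indicator) measurable
    finally show "(\<integral>\<^sup>+y. ennreal (\<Psi> (\<phi> y t)) \<partial>N)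
        = emeasure N {y\<in>space N. t < \<bar>g y\<bar>} * ennreal (\<Phi> (\<epsilon> / w t))"
      by (simp add: mult.commute)
  qed
  also have "\<dots> = (\<integral>\<^sup>+t. d t * (emeasure N {y\<in>space N. t < \<bar>g y\<bar>} * ennreal (\<Phi> (\<epsilon> / w t))) \<partial>lborel)"
  proof -
    have m1: "(\<lambda>t. emeasure N {y\<in>space N. t < \<bar>g y\<bar>}) \<in> borel_measurable borel"
      by (rule meas_level_emeasure[OF N g])
    have "(\<lambda>t. ennreal (\<Psi> (\<epsilon> / w t))) \<in> borel_measurable borel" by measurable
    moreover have "\<And>t. \<Psi> (\<epsilon> / w t) = \<Phi> (\<epsilon> / w t)" using eps wnn by (simp add: PsiE)
    ultimately have m2: "(\<lambda>t. ennreal (\<Phi> (\<epsilon> / w t))) \<in> borel_measurable borel" by simp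
    show ?thesis unfolding P_def
      by (rule nn_integral_density) (use m1 m2 in auto)
  qed
  finally show ?thesis by (simp add: d_def)
qed

lemma level_preimage:
  assumes "\<tau> \<in> measurable N M"
  shows "\<tau> -` {x\<in>space M. t < \<bar>h x\<bar>} \<inter> space N = {y\<in>space N. t < \<bar>h (\<tau> y)\<bar>}"
  using assms by (auto dest: measurable_space)

lemma AE_levels:
  fixes h :: "'a \<Rightarrow> real" and \<tau> :: "'b \<Rightarrow> 'a"
  assumes h[measurable]: "h \<in> borel_measurable M" and tau[measurable]: "\<tau> \<in> measurable N M"
    and ns: "\<forall>E \<in> sets M. emeasure M E = 0 \<longrightarrow> emeasure N (\<tau> -` E \<inter> space N) = 0"
  shows "AE y in N. \<forall>t>0. t < \<bar>h (\<tau> y)\<bar> \<longrightarrow> 0 < emeasure M {x\<in>space M. t < \<bar>h x\<bar>}"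
proof -
  define Z where "Z = {q \<in> \<rat>. 0 < q \<and> emeasure M {x\<in>space M. q < \<bar>h x\<bar>} = 0}"
  define B where "B = (\<Union>q\<in>Z. {x\<in>space M. q < \<bar>h x\<bar>})"
  have "countable Z" unfolding Z_def
    by (rule countable_subset[OF _ countable_rat]) auto
  then have Bnull: "B \<in> null_sets M" unfolding B_def
    by (intro null_sets_UN') (auto simp: Z_def null_sets_def)
  then have "B \<in> sets M" "emeasure M B = 0" by auto
  then have "emeasure N (\<tau> -` B \<inter> space N) = 0" using ns by auto
  moreover have "\<tau> -` B \<inter> space N \<in> sets N"
    using \<open>B \<in> sets M\<close> by measurable
  ultimately have nullN: "\<tau> -` B \<inter> space N \<in> null_sets N" by auto
  show ?thesis
  proof (rule AE_I'[OF nullN], safe)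
    fix y t assume y: "y \<in> space N" and t: "0 < t" "t < \<bar>h (\<tau> y)\<bar>"
      and nz: "\<not> 0 < emeasure M {x\<in>space M. t < \<bar>h x\<bar>}"
    obtain q where q: "q \<in> \<rat>" "t < q" "q < \<bar>h (\<tau> y)\<bar>"
      using Rats_dense_in_real[OF t(2)] by auto
    have "emeasure M {x\<in>space M. q < \<bar>h x\<bar>} \<le> emeasure M {x\<in>space M. t < \<bar>h x\<bar>}"
      using q by (intro emeasure_mono) auto
    then have "emeasure M {x\<in>space M. q < \<bar>h x\<bar>} = 0" using nz by (simp add: not_less)
    then have "q \<in> Z" using q t by (auto simp: Z_def)
    moreover have "\<tau> y \<in> space M" using measurable_space[OF tau y] .
    ultimately show "y \<in> \<tau> -` B" using q by (auto simp: B_def)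
  qed
qed

lemma enn_powr_top: "enn_powr top a = top"
  by (simp add: enn_powr_def)

lemma enn_powr_fin: "m \<noteq> top \<Longrightarrow> enn_powr m a = ennreal (enn2real m powr a)"
  by (simp add: enn_powr_def)

lemma levels_finite:
  fixes h :: "'a \<Rightarrow> real"
  assumes L: "lorentz_norm M p h < top" and t: "0 < t" and h[measurable]: "h \<in> borel_measurable M"
  shows "emeasure M {x\<in>space M. t < \<bar>h x\<bar>} < top"
proof (rule ccontr)
  assume "\<not> ?thesis"
  then have inf: "emeasure M {x\<in>space M. t < \<bar>h x\<bar>} = top" by (metis less_top)
  have "(\<integral>\<^sup>+s. top * indicator {0<..<t} s \<partial>lborel) \<le> lorentz_norm M p h"
    unfolding lorentz_norm_def
  proof (rule nn_integral_mono)
    fix s :: real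
    show "top * indicator {0<..<t} s \<le> indicator {0<..} s *
        enn_powr (emeasure M {x \<in> space M. s < \<bar>h x\<bar>}) (1 / p)"
    proof (cases "0 < s \<and> s < t")
      case True
      have "emeasure M {x\<in>space M. t < \<bar>h x\<bar>} \<le> emeasure M {x\<in>space M. s < \<bar>h x\<bar>}"
        using True by (intro emeasure_mono) auto
      then have "emeasure M {x\<in>space M. s < \<bar>h x\<bar>} = top" using inf by (simp add: top_unique)
      then show ?thesis using True by (simp add: enn_powr_top)
    qed auto
  qed
  moreover have "(\<integral>\<^sup>+s. top * indicator {0<..<t} s \<partial>lborel) = top"
    using t by (simp add: nn_integral_cmult_indicator ennreal_mult_top)
  ultimately show False using L by (simp add: top_unique)
qed

definition lev_a :: "'a measure \<Rightarrow> real \<Rightarrow> ('a \<Rightarrow> real) \<Rightarrow> real \<Rightarrow> real" where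
  "lev_a M p h t = enn2real (emeasure M {x\<in>space M. t < \<bar>h x\<bar>}) powr (1 / p)"

lemma lev_a_meas:
  fixes h :: "'a \<Rightarrow> real"
  assumes "sigma_finite_measure M" "h \<in> borel_measurable M"
  shows "lev_a M p h \<in> borel_measurable borel"
proof -
  have [measurable]: "(\<lambda>t. emeasure M {x\<in>space M. t < \<bar>h x\<bar>}) \<in> borel_measurable borel"
    by (rule meas_level_emeasure[OF assms])
  show ?thesis unfolding lev_a_def by measurable
qed

lemma lev_a_nonneg: "0 \<le> lev_a M p h t"
  by (simp add: lev_a_def)

lemma lorentz_eq:
  fixes h :: "'a \<Rightarrow> real"
  assumes L: "lorentz_norm M p h < top" and h[measurable]: "h \<in> borel_measurable M"
  shows "lorentz_norm M p h = (\<integral>\<^sup>+t. ennreal (indicator {0<..} t * lev_a M p h t) \<partial>lborel)"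
  unfolding lorentz_norm_def
proof (rule nn_integral_cong)
  fix t :: real
  show "indicator {0<..} t * enn_powr (emeasure M {x \<in> space M. t < \<bar>h x\<bar>}) (1 / p) =
         ennreal (indicator {0<..} t * lev_a M p h t)"
  proof (cases "0 < t")
    case True
    then show ?thesis using levels_finite[OF L True h]
      by (simp add: enn_powr_fin lev_a_def)
  qed simp
qed

lemma lev_a_pos:
  fixes h :: "'a \<Rightarrow> real"
  assumes L: "lorentz_norm M p h < top" and t: "0 < t" and h[measurable]: "h \<in> borel_measurable M"
  shows "0 < lev_a M p h t \<longleftrightarrow> 0 < emeasure M {x\<in>space M. t < \<bar>h x\<bar>}"
  using levels_finite[OF L t h]
  by (cases "emeasure M {x\<in>space M. t < \<bar>h x\<bar>}") (auto simp: lev_a_def)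

lemma lev_a_antimono:
  fixes h :: "'a \<Rightarrow> real"
  assumes L: "lorentz_norm M p h < top" and t: "0 < s" "s \<le> t" and p: "0 < p"
    and h[measurable]: "h \<in> borel_measurable M"
  shows "lev_a M p h t \<le> lev_a M p h s"
proof -
  have le: "emeasure M {x\<in>space M. t < \<bar>h x\<bar>} \<le> emeasure M {x\<in>space M. s < \<bar>h x\<bar>}"
    using t by (intro emeasure_mono) auto
  have "enn2real (emeasure M {x\<in>space M. t < \<bar>h x\<bar>}) \<le> enn2real (emeasure M {x\<in>space M. s < \<bar>h x\<bar>})"
    using le levels_finite[OF L t(1) h] by (intro enn2real_mono) auto
  then show ?thesis unfolding lev_a_def using p by (intro powr_mono2) auto
qed

lemma vb_prod:
  assumes Y: "young_function \<Phi>" and D: "1 \<le> D" and p: "0 < p"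
    and m: "0 < m" "m < top" and nu: "\<nu> \<le> volume_bound \<Phi> D p m"
    and y: "0 \<le> y" "y \<le> 1 / (D * enn2real m powr (1 / p))"
  shows "\<nu> * ennreal (\<Phi> y) \<le> 1"
proof -
  define a where "a = enn2real m powr (1 / p)"
  have "0 < enn2real m" using m by (cases m) auto
  then have a: "0 < a" unfolding a_def by simp
  define x where "x = 1 / (D * a)"
  have x: "0 < x" using a D by (simp add: x_def)
  have Px: "0 < \<Phi> x" using young_pos[OF Y x] .
  have vb: "volume_bound \<Phi> D p m = ennreal (1 / \<Phi> x)"
    using m by (simp add: volume_bound_def x_def a_def less_top[symmetric])
  have Py: "\<Phi> y \<le> \<Phi> x" using y young_mono[OF Y] by (simp add: x_def a_def)
  have "\<nu> * ennreal (\<Phi> y) \<le> ennreal (1 / \<Phi> x) * ennreal (\<Phi> y)"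
    using nu vb by (intro mult_right_mono) auto
  also have "\<dots> = ennreal (\<Phi> y / \<Phi> x)"
    using Px young_nonneg[OF Y y(1)] by (subst ennreal_mult[symmetric]) auto
  also have "\<dots> \<le> 1" using Px Py by simp
  finally show ?thesis .
qed

lemma choice1:
  fixes M :: "'a measure" and N :: "'b measure" and h :: "'a \<Rightarrow> real"
  assumes SM: "sigma_finite_measure M" and SN: "sigma_finite_measure N"
    and tau[measurable]: "\<tau> \<in> measurable N M"
    and ns: "\<forall>E \<in> sets M. emeasure M E = 0 \<longrightarrow> emeasure N (\<tau> -` E \<inter> space N) = 0"
    and p: "0 < p" and Y: "young_function \<Phi>"
    and vol: "\<forall>E \<in> sets M. emeasure N (\<tau> -` E \<inter> space N) \<le> volume_bound \<Phi> D p (emeasure M E)"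
    and D: "1 \<le> D"
    and h[measurable]: "h \<in> borel_measurable M"
    and L: "lorentz_norm M p h = ennreal l" and l: "0 < l" and lam: "D * l \<le> r"
  shows "(\<integral>\<^sup>+y. ennreal (\<Phi> (\<bar>h (\<tau> y)\<bar> / r)) \<partial>N) \<le> 1"
proof -
  have Lt: "lorentz_norm M p h < top" using L by simp
  have lam0: "0 < r" using D l lam by (smt (verit) mult_pos_pos)
  define w where "w t = lev_a M p h t / l" for t
  have wm[measurable]: "w \<in> borel_measurable borel"
    using lev_a_meas[OF SM h] unfolding w_def by measurable
  have wnn: "\<And>t. 0 \<le> w t" unfolding w_def by (rule divide_nonneg_pos[OF lev_a_nonneg l])
  have w1: "(\<integral>\<^sup>+t. ennreal (indicator {0<..} t * w t) \<partial>lborel) = 1"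
  proof -
    have "(\<integral>\<^sup>+t. ennreal (indicator {0<..} t * w t) \<partial>lborel)
        = (\<integral>\<^sup>+t. ennreal (1 / l) * ennreal (indicator {0<..} t * lev_a M p h t) \<partial>lborel)"
      using l by (intro nn_integral_cong) (simp add: w_def ennreal_mult''[symmetric] lev_a_nonneg)
    also have "\<dots> = ennreal (1 / l) * lorentz_norm M p h"
      using lev_a_meas[OF SM h] lorentz_eq[OF Lt h] by (subst nn_integral_cmult) auto
    also have "\<dots> = 1" using L l by (simp add: ennreal_mult''[symmetric])
    finally show ?thesis .
  qed
  have AEw: "AE y in N. \<forall>t>0. t < \<bar>h (\<tau> y)\<bar> \<longrightarrow> 0 < w t"
    using AE_levels[OF h tau ns]
  proof (rule eventually_mono)
    fix y assume "\<forall>t>0. t < \<bar>h (\<tau> y)\<bar> \<longrightarrow> 0 < emeasure M {x\<in>space M. t < \<bar>h x\<bar>}"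
    then show "\<forall>t>0. t < \<bar>h (\<tau> y)\<bar> \<longrightarrow> 0 < w t"
      using lev_a_pos[OF Lt _ h] l by (auto simp: w_def)
  qed
  have gm: "(\<lambda>y. h (\<tau> y)) \<in> borel_measurable N" by measurable
  have "(\<integral>\<^sup>+y. ennreal (\<Phi> (\<bar>h (\<tau> y)\<bar> / r)) \<partial>N) = (\<integral>\<^sup>+y. ennreal (\<Phi> ((1/r) * \<bar>h (\<tau> y)\<bar>)) \<partial>N)"
    by simp
  also have "\<dots> \<le> (\<integral>\<^sup>+t. ennreal (indicator {0<..} t * w t) *
            (emeasure N {y\<in>space N. t < \<bar>h (\<tau> y)\<bar>} * ennreal (\<Phi> ((1/r) / w t))) \<partial>lborel)"
    by (rule lemma_G[OF Y SN gm _ wm wnn w1 AEw]) (use lam0 in simp)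
  also have "\<dots> \<le> (\<integral>\<^sup>+t. ennreal (indicator {0<..} t * w t) \<partial>lborel)"
  proof (rule nn_integral_mono)
    fix t :: real
    show "ennreal (indicator {0<..} t * w t) *
            (emeasure N {y\<in>space N. t < \<bar>h (\<tau> y)\<bar>} * ennreal (\<Phi> ((1/r) / w t)))
          \<le> ennreal (indicator {0<..} t * w t)"
    proof (cases "0 < t \<and> 0 < w t")
      case True
      then have t: "0 < t" and a: "0 < lev_a M p h t" using l by (auto simp: w_def zero_less_divide_iff)
      have mpos: "0 < emeasure M {x\<in>space M. t < \<bar>h x\<bar>}" using lev_a_pos[OF Lt t h] a by simp
      have mfin: "emeasure M {x\<in>space M. t < \<bar>h x\<bar>} < top" using levels_finite[OF Lt t h] .
      have nu: "emeasure N {y\<in>space N. t < \<bar>h (\<tau> y)\<bar>}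
           \<le> volume_bound \<Phi> D p (emeasure M {x\<in>space M. t < \<bar>h x\<bar>})"
      proof -
        have "{x\<in>space M. t < \<bar>h x\<bar>} \<in> sets M" by measurable
        then have "emeasure N (\<tau> -` {x\<in>space M. t < \<bar>h x\<bar>} \<inter> space N)
           \<le> volume_bound \<Phi> D p (emeasure M {x\<in>space M. t < \<bar>h x\<bar>})" using vol by blast
        then show ?thesis unfolding level_preimage[OF tau] .
      qed
      have "(1/r) / w t = l / (r * lev_a M p h t)" using l by (simp add: w_def field_simps)
      also have "\<dots> \<le> l / (D * l * lev_a M p h t)"
      proof (rule frac_le)
        show "0 < D * l * lev_a M p h t" using D l a by simp
        show "D * l * lev_a M p h t \<le> r * lev_a M p h t"
          using lam a by (intro mult_right_mono) auto
      qed (use l in auto)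
      also have "\<dots> = 1 / (D * lev_a M p h t)" using l by simp
      finally have yle: "(1/r) / w t \<le> 1 / (D * enn2real (emeasure M {x\<in>space M. t < \<bar>h x\<bar>}) powr (1 / p))"
        by (simp add: lev_a_def)
      have "emeasure N {y\<in>space N. t < \<bar>h (\<tau> y)\<bar>} * ennreal (\<Phi> ((1/r) / w t)) \<le> 1"
        by (rule vb_prod[OF Y D p mpos mfin nu _ yle]) (use lam0 wnn in simp)
      then show ?thesis by (metis mult.right_neutral mult_left_mono zero_le)
    next
      case False
      then have z: "indicator {0<..} t * w t = 0" using wnn[of t] by auto
      show ?thesis unfolding z by simp
    qed
  qed
  also have "\<dots> = 1" by (rule w1)
  finally show ?thesis .
qed

lemma zero_case:
  fixes M :: "'a measure" and N :: "'b measure" and h :: "'a \<Rightarrow> real"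
  assumes SM: "sigma_finite_measure M"
    and tau[measurable]: "\<tau> \<in> measurable N M"
    and ns: "\<forall>E \<in> sets M. emeasure M E = 0 \<longrightarrow> emeasure N (\<tau> -` E \<inter> space N) = 0"
    and p: "0 < p" and h[measurable]: "h \<in> borel_measurable M"
    and L: "lorentz_norm M p h = 0"
  shows "AE y in N. h (\<tau> y) = 0"
proof -
  have Lt: "lorentz_norm M p h < top" using L by simp
  have all0: "\<not> 0 < emeasure M {x\<in>space M. t < \<bar>h x\<bar>}" if t: "0 < t" for t
  proof
    assume "0 < emeasure M {x\<in>space M. t < \<bar>h x\<bar>}"
    then have a: "0 < lev_a M p h t" using lev_a_pos[OF Lt t h] by simp
    have "(\<integral>\<^sup>+s. ennreal (lev_a M p h t) * indicator {0<..<t} s \<partial>lborel)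
        \<le> (\<integral>\<^sup>+s. ennreal (indicator {0<..} s * lev_a M p h s) \<partial>lborel)"
    proof (rule nn_integral_mono)
      fix s :: real
      show "ennreal (lev_a M p h t) * indicator {0<..<t} s \<le> ennreal (indicator {0<..} s * lev_a M p h s)"
        using lev_a_antimono[OF Lt _ _ p h, of s t] by (cases "0 < s \<and> s < t") (auto simp: indicator_def ennreal_leI)
    qed
    also have "\<dots> = 0" using lorentz_eq[OF Lt h] L by simp
    finally have "ennreal (lev_a M p h t) * ennreal t \<le> 0"
      using t by (simp add: nn_integral_cmult_indicator)
    then show False using a t by (simp add: ennreal_mult''[symmetric])
  qed
  show ?thesis
    using AE_levels[OF h tau ns]
  proof (rule eventually_mono)
    fix y assume H: "\<forall>t>0. t < \<bar>h (\<tau> y)\<bar> \<longrightarrow> 0 < emeasure M {x\<in>space M. t < \<bar>h x\<bar>}"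
    show "h (\<tau> y) = 0"
    proof (rule ccontr)
      assume "h (\<tau> y) \<noteq> 0"
      then have "0 < \<bar>h (\<tau> y)\<bar> / 2" "\<bar>h (\<tau> y)\<bar> / 2 < \<bar>h (\<tau> y)\<bar>" by auto
      then show False using H all0 by blast
    qed
  qed
qed

lemma vb_fin:
  assumes "m < top" shows "volume_bound \<Phi> D p m < top"
  using assms by (simp add: volume_bound_def)

lemma choice2:
  fixes M :: "'a measure" and N :: "'b measure" and h :: "'a \<Rightarrow> real"
  assumes SM: "sigma_finite_measure M" and SN: "sigma_finite_measure N"
    and tau[measurable]: "\<tau> \<in> measurable N M"
    and ns: "\<forall>E \<in> sets M. emeasure M E = 0 \<longrightarrow> emeasure N (\<tau> -` E \<inter> space N) = 0"
    and p: "0 < p" and Y: "young_function \<Phi>"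
    and vol: "\<forall>E \<in> sets M. emeasure N (\<tau> -` E \<inter> space N) \<le> volume_bound \<Phi> D p (emeasure M E)"
    and D: "1 \<le> D"
    and h[measurable]: "h \<in> borel_measurable M"
    and Lt: "lorentz_norm M p h < top" and eps: "0 < \<epsilon>"
  shows "(\<integral>\<^sup>+y. ennreal (\<Phi> (\<epsilon> * \<bar>h (\<tau> y)\<bar>)) \<partial>N) < top"
proof -
  define a where "a = lev_a M p h"
  have am[measurable]: "a \<in> borel_measurable borel" unfolding a_def by (rule lev_a_meas[OF SM h])
  have ann: "\<And>t. 0 \<le> a t" by (simp add: a_def lev_a_nonneg)
  define K where "K = \<epsilon> * D"
  have K: "0 < K" using eps D by (simp add: K_def)
  define Q where "Q = density lborel (\<lambda>t. ennreal (indicator {0<..} t * a t))"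
  have sQ: "sets Q = sets borel" by (simp add: Q_def)
  have emQ: "emeasure Q A = (\<integral>\<^sup>+t. ennreal (indicator {0<..} t * a t) * indicator A t \<partial>lborel)"
    if "A \<in> sets borel" for A
    unfolding Q_def using that by (subst emeasure_density) auto
  have QU: "emeasure Q UNIV < top"
    using emQ[of UNIV] lorentz_eq[OF Lt h] Lt by (simp add: a_def)
  define T where "T n = {0<..<1 / (real n + 2)} \<union> {real n + 2<..}" for n :: nat
  have Tsets: "range T \<subseteq> sets Q" by (auto simp: T_def sQ)
  have Tdec: "decseq T"
  proof (rule decseq_SucI)
    fix n
    have "1 / (real (Suc n) + 2) \<le> 1 / (real n + 2)" by (simp add: frac_le)
    then show "T (Suc n) \<subseteq> T n" by (auto simp: T_def)
  qed
  have Tfin: "emeasure Q (T n) \<noteq> \<infinity>" for n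
    using emeasure_mono[of "T n" UNIV Q] QU by (auto simp: sQ top_unique)
  have Tint: "(\<Inter>n. T n) = {}"
  proof (safe)
    fix t assume H: "t \<in> (\<Inter>n. T n)"
    obtain n :: nat where n: "t < real n" "1 / t < real n" by (metis reals_Archimedean2 max.strict_boundedE max_less_iff_conj)
    have "t \<in> T n" using H by auto
    moreover have "\<not> t < 1 / (real n + 2)" if "0 < t"
    proof
      assume "t < 1 / (real n + 2)"
      then have "t * (real n + 2) < 1" using that by (simp add: field_simps)
      moreover have "1 < t * real n" using n that by (simp add: field_simps)
      ultimately show False using that by (simp add: algebra_simps)
    qed
    ultimately show "t \<in> {}" using n by (auto simp: T_def)
  qed
  have "(\<lambda>n. emeasure Q (T n)) \<longlonglongrightarrow> emeasure Q (\<Inter>n. T n)"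
    by (rule Lim_emeasure_decseq[OF Tsets Tdec Tfin])
  then have lim: "(\<lambda>n. emeasure Q (T n)) \<longlonglongrightarrow> 0" using Tint by simp
  have "0 < ennreal (1 / (2 * K))" using K by simp
  from order_tendstoD(2)[OF lim this] obtain n where n: "emeasure Q (T n) < ennreal (1 / (2 * K))"
    by (auto dest: eventually_happens)
  define R where "R = enn2real (emeasure Q (T n))"
  have QR: "emeasure Q (T n) = ennreal R" using Tfin[of n] by (simp add: R_def ennreal_enn2real_if)
  have R0: "0 \<le> R" by (simp add: R_def)
  have KR: "K * R < 1 / 2"
  proof -
    have "R < 1 / (2 * K)" using n QR K by (metis ennreal_less_iff R0)
    then show ?thesis using K by (simp add: field_simps)
  qed
  define s where "s = 1 / (real n + 2)"
  define S where "S = real n + 2"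
  have s0: "0 < s" by (simp add: s_def add_pos_nonneg)
  have "s \<le> 1" by (simp add: s_def divide_le_eq)
  moreover have "2 \<le> S" by (simp add: S_def)
  ultimately have sS: "s < S" by simp
  define c where "c = (1 - K * R) / (S - s)"
  have c: "0 < c" using KR sS by (simp add: c_def)
  define w where "w t = (if t \<in> {s..S} then c else K * a t)" for t
  have wm[measurable]: "w \<in> borel_measurable borel" unfolding w_def by measurable
  have wnn: "\<And>t. 0 \<le> w t" using c K ann by (simp add: w_def)
  have TnE: "T n = {0<..<s} \<union> {S<..}" by (simp add: T_def s_def S_def)
  have w1: "(\<integral>\<^sup>+t. ennreal (indicator {0<..} t * w t) \<partial>lborel) = 1"
  proof -
    have "(\<integral>\<^sup>+t. ennreal (indicator {0<..} t * w t) \<partial>lborel)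
        = (\<integral>\<^sup>+t. ennreal K * (ennreal (indicator {0<..} t * a t) * indicator (T n) t)
              + ennreal c * indicator {s..S} t \<partial>lborel)"
    proof (rule nn_integral_cong)
      fix t :: real
      show "ennreal (indicator {0<..} t * w t) = ennreal K * (ennreal (indicator {0<..} t * a t) * indicator (T n) t)
              + ennreal c * indicator {s..S} t"
      proof (cases "0 < t")
        case False
        then have "t \<notin> T n" "t \<notin> {s..S}" using s0 sS by (auto simp: TnE)
        then show ?thesis using False by simp
      next
        case True
        show ?thesis
        proof (cases "t \<in> {s..S}")
          case True2: True
          then have "t \<notin> T n" by (auto simp: TnE)
          then show ?thesis using True True2 by (simp add: w_def)
        next
          case False2: False
          then have "t \<in> T n" using True by (auto simp: TnE)
          then show ?thesis using True False2 K ann[of t] by (auto simp: w_def ennreal_mult)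
        qed
      qed
    qed
    also have "\<dots> = (\<integral>\<^sup>+t. ennreal K * (ennreal (indicator {0<..} t * a t) * indicator (T n) t) \<partial>lborel)
              + (\<integral>\<^sup>+t. ennreal c * indicator {s..S} t \<partial>lborel)"
      by (rule nn_integral_add) (auto simp: T_def)
    also have "\<dots> = ennreal K * emeasure Q (T n) + ennreal c * emeasure lborel {s..S}"
    proof -
      have Tb: "T n \<in> sets borel" by (simp add: T_def)
      have "(\<integral>\<^sup>+t. ennreal K * (ennreal (indicator {0<..} t * a t) * indicator (T n) t) \<partial>lborel)
          = ennreal K * (\<integral>\<^sup>+t. ennreal (indicator {0<..} t * a t) * indicator (T n) t \<partial>lborel)"
        by (rule nn_integral_cmult) (use Tb in auto)
      also have "\<dots> = ennreal K * emeasure Q (T n)" using emQ[OF Tb] by simp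
      finally show ?thesis by (simp add: nn_integral_cmult_indicator)
    qed
    also have "\<dots> = ennreal (K * R + c * (S - s))"
    proof -
      have 1: "ennreal K * ennreal R = ennreal (K*R)" using K R0 by (simp add: ennreal_mult)
      have 2: "ennreal c * ennreal (S-s) = ennreal (c*(S-s))" using c sS by (simp add: ennreal_mult)
      have "ennreal (K * R + c * (S - s)) = ennreal (K*R) + ennreal (c*(S-s))"
        using K R0 c sS by (intro ennreal_plus) auto
      then show ?thesis using QR sS by (simp only: 1 2 emeasure_lborel_Icc less_imp_le)
    qed
    also have "K * R + c * (S - s) = 1" using sS by (simp add: c_def)
    finally show ?thesis by simp
  qed
  have AEw: "AE y in N. \<forall>t>0. t < \<bar>h (\<tau> y)\<bar> \<longrightarrow> 0 < w t"
    using AE_levels[OF h tau ns]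
  proof (rule eventually_mono)
    fix y assume "\<forall>t>0. t < \<bar>h (\<tau> y)\<bar> \<longrightarrow> 0 < emeasure M {x\<in>space M. t < \<bar>h x\<bar>}"
    then show "\<forall>t>0. t < \<bar>h (\<tau> y)\<bar> \<longrightarrow> 0 < w t"
      using lev_a_pos[OF Lt _ h] c K by (auto simp: w_def a_def)
  qed
  have gm: "(\<lambda>y. h (\<tau> y)) \<in> borel_measurable N" by measurable
  define \<nu>s where "\<nu>s = emeasure N {y\<in>space N. s < \<bar>h (\<tau> y)\<bar>}"
  have nuvol: "emeasure N {y\<in>space N. t < \<bar>h (\<tau> y)\<bar>}
           \<le> volume_bound \<Phi> D p (emeasure M {x\<in>space M. t < \<bar>h x\<bar>})" for t
  proof -
    have "{x\<in>space M. t < \<bar>h x\<bar>} \<in> sets M" by measurable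
    then have "emeasure N (\<tau> -` {x\<in>space M. t < \<bar>h x\<bar>} \<inter> space N)
       \<le> volume_bound \<Phi> D p (emeasure M {x\<in>space M. t < \<bar>h x\<bar>})" using vol by blast
    then show ?thesis unfolding level_preimage[OF tau] .
  qed
  have nus: "\<nu>s < top"
    using nuvol[of s] vb_fin[OF levels_finite[OF Lt s0 h], of \<Phi> D p]
    unfolding \<nu>s_def by (rule le_less_trans)
  have "(\<integral>\<^sup>+y. ennreal (\<Phi> (\<epsilon> * \<bar>h (\<tau> y)\<bar>)) \<partial>N)
     \<le> (\<integral>\<^sup>+t. ennreal (indicator {0<..} t * w t) *
            (emeasure N {y\<in>space N. t < \<bar>h (\<tau> y)\<bar>} * ennreal (\<Phi> (\<epsilon> / w t))) \<partial>lborel)"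
    by (rule lemma_G[OF Y SN gm eps wm wnn w1 AEw])
  also have "\<dots> \<le> (\<integral>\<^sup>+t. ennreal (indicator {0<..} t * w t)
        + (ennreal c * (\<nu>s * ennreal (\<Phi> (\<epsilon> / c)))) * indicator {s..S} t \<partial>lborel)"
  proof (rule nn_integral_mono)
    fix t :: real
    show "ennreal (indicator {0<..} t * w t) *
            (emeasure N {y\<in>space N. t < \<bar>h (\<tau> y)\<bar>} * ennreal (\<Phi> (\<epsilon> / w t)))
          \<le> ennreal (indicator {0<..} t * w t)
        + (ennreal c * (\<nu>s * ennreal (\<Phi> (\<epsilon> / c)))) * indicator {s..S} t"
    proof (cases "0 < t \<and> t \<in> {s..S}")
      case True
      then have wt: "w t = c" and ind: "indicator {0<..} t = (1::real)" by (auto simp: w_def)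
      have "emeasure N {y\<in>space N. t < \<bar>h (\<tau> y)\<bar>} \<le> \<nu>s"
        unfolding \<nu>s_def using True by (intro emeasure_mono) auto
      then have "ennreal c * (emeasure N {y\<in>space N. t < \<bar>h (\<tau> y)\<bar>} * ennreal (\<Phi> (\<epsilon> / c)))
          \<le> ennreal c * (\<nu>s * ennreal (\<Phi> (\<epsilon> / c)))"
        by (intro mult_left_mono mult_right_mono) auto
      then show ?thesis using True by (simp add: wt ind add_increasing)
    next
      case False
      show ?thesis
      proof (cases "0 < t \<and> 0 < a t")
        case True
        then have t: "0 < t" and at: "0 < a t" by auto
        have wt: "w t = K * a t" using False t by (auto simp: w_def)
        have mpos: "0 < emeasure M {x\<in>space M. t < \<bar>h x\<bar>}"
          using lev_a_pos[OF Lt t h] at by (simp add: a_def)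
        have mfin: "emeasure M {x\<in>space M. t < \<bar>h x\<bar>} < top" using levels_finite[OF Lt t h] .
        have "\<epsilon> / w t = 1 / (D * enn2real (emeasure M {x\<in>space M. t < \<bar>h x\<bar>}) powr (1 / p))"
          using eps at by (simp add: wt K_def a_def lev_a_def)
        then have yle: "\<epsilon> / w t \<le> 1 / (D * enn2real (emeasure M {x\<in>space M. t < \<bar>h x\<bar>}) powr (1 / p))"
          by simp
        have "emeasure N {y\<in>space N. t < \<bar>h (\<tau> y)\<bar>} * ennreal (\<Phi> (\<epsilon> / w t)) \<le> 1"
          by (rule vb_prod[OF Y D p mpos mfin nuvol _ yle]) (use eps wnn in simp)
        then have "ennreal (indicator {0<..} t * w t) *
            (emeasure N {y\<in>space N. t < \<bar>h (\<tau> y)\<bar>} * ennreal (\<Phi> (\<epsilon> / w t)))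
            \<le> ennreal (indicator {0<..} t * w t)"
          by (metis mult.right_neutral mult_left_mono zero_le)
        then show ?thesis by (rule order_trans) simp
      next
        case False2: False
        have z: "indicator {0<..} t * w t = 0"
          using False False2 ann[of t] by (auto simp: w_def)
        show ?thesis unfolding z by simp
      qed
    qed
  qed
  also have "\<dots> = 1 + ennreal c * (\<nu>s * ennreal (\<Phi> (\<epsilon> / c))) * emeasure lborel {s..S}"
    using w1 by (subst nn_integral_add) (auto simp: nn_integral_cmult_indicator)
  also have "\<dots> < top"
    using nus sS by (simp add: ennreal_mult_eq_top_iff less_top[symmetric])
  finally show ?thesis .
qed

lemma orlicz_le:
  assumes x: "0 \<le> x" and H: "\<And>r. x < r \<Longrightarrow> (\<integral>\<^sup>+y. ennreal (\<Phi> (\<bar>g y\<bar> / r)) \<partial>N) \<le> 1"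
  shows "orlicz_norm N \<Phi> g \<le> ennreal x"
  unfolding orlicz_norm_def
proof (rule ennreal_le_epsilon)
  fix e :: real assume e: "0 < e"
  have "Inf {ennreal lam |lam. 0 < lam \<and> (\<integral>\<^sup>+ y. ennreal (\<Phi> (\<bar>g y\<bar> / lam)) \<partial>N) \<le> 1} \<le> ennreal (x + e)"
    apply (rule Inf_lower, rule CollectI, rule exI[of _ "x + e"])
    using x e H[of "x + e"] by simp
  then show "Inf {ennreal lam |lam. 0 < lam \<and> (\<integral>\<^sup>+ y. ennreal (\<Phi> (\<bar>g y\<bar> / lam)) \<partial>N) \<le> 1}
      \<le> ennreal x + ennreal e" using x e by (simp add: ennreal_plus)
qed

lemma lorentz_indicator:
  assumes E: "E \<in> sets M" and m: "emeasure M E = ennreal mr" "0 \<le> mr"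
  shows "lorentz_norm M p (indicator E :: 'a \<Rightarrow> real) = ennreal (mr powr (1 / p))"
proof -
  have "lorentz_norm M p (indicator E :: 'a \<Rightarrow> real)
      = (\<integral>\<^sup>+t. ennreal (mr powr (1 / p)) * indicator {0<..<1::real} t \<partial>lborel)"
    unfolding lorentz_norm_def
  proof (rule nn_integral_cong)
    fix t :: real
    have sub: "E \<subseteq> space M" using sets.sets_into_space[OF E] .
    show "indicator {0<..} t * enn_powr (emeasure M {x \<in> space M. t < \<bar>indicator E x :: real\<bar>}) (1 / p)
        = ennreal (mr powr (1 / p)) * indicator {0<..<1} t"
    proof (cases "0 < t \<and> t < 1")
      case True
      then have "{x \<in> space M. t < \<bar>indicator E x :: real\<bar>} = E" using sub by (auto simp: indicator_def)
      then show ?thesis using True m by (simp add: enn_powr_fin)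
    next
      case False
      show ?thesis
      proof (cases "0 < t")
        case True
        then have "{x \<in> space M. t < \<bar>indicator E x :: real\<bar>} = {}" using False by (auto simp: indicator_def)
        then have e: "emeasure M {x \<in> space M. t < \<bar>indicator E x :: real\<bar>} = 0" by (simp only: emeasure_empty)
        show ?thesis unfolding e using True False by (simp add: enn_powr_def)
      qed (use False in simp)
    qed
  qed
  also have "\<dots> = ennreal (mr powr (1 / p))" by (simp add: nn_integral_cmult_indicator)
  finally show ?thesis .
qed

theorem theorem1p5:
  fixes M :: "'a measure" and N :: "'b measure"
    and \<tau> :: "'b \<Rightarrow> 'a" and p :: real and \<Phi> :: "real \<Rightarrow> real"
  assumes "sigma_finite_measure M" and "sigma_finite_measure N"
    and "\<tau> \<in> measurable N M"
    and "\<forall>E \<in> sets M. emeasure M E = 0 \<longrightarrow> emeasure N (\<tau> -` E \<inter> space N) = 0"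
    and "0 < p"
    and "young_function \<Phi>"
  shows "(\<exists>C>0. \<forall>f \<in> lorentz_space M p.
            (f \<circ> \<tau>) \<in> orlicz_space N \<Phi> \<and>
            orlicz_norm N \<Phi> (f \<circ> \<tau>) \<le> ennreal C * lorentz_norm M p f)
     \<longleftrightarrow> (\<exists>D\<ge>1. \<forall>E \<in> sets M.
            emeasure N (\<tau> -` E \<inter> space N) \<le> volume_bound \<Phi> D p (emeasure M E))"
proof -
  note SM = assms(1) and SN = assms(2) and tau[measurable] = assms(3) and ns = assms(4)
    and p = assms(5) and Y = assms(6)
  show ?thesis
  proof
    assume "\<exists>C>0. \<forall>f \<in> lorentz_space M p.
            (f \<circ> \<tau>) \<in> orlicz_space N \<Phi> \<and>
            orlicz_norm N \<Phi> (f \<circ> \<tau>) \<le> ennreal C * lorentz_norm M p f"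
    then obtain C where C: "0 < C" and HC: "\<And>f. f \<in> lorentz_space M p \<Longrightarrow>
            (f \<circ> \<tau>) \<in> orlicz_space N \<Phi> \<and>
            orlicz_norm N \<Phi> (f \<circ> \<tau>) \<le> ennreal C * lorentz_norm M p f" by blast
    define D where "D = max 1 (2 * C)"
    have D1: "1 \<le> D" and DC: "C < D" using C by (auto simp: D_def)
    have "\<forall>E \<in> sets M. emeasure N (\<tau> -` E \<inter> space N) \<le> volume_bound \<Phi> D p (emeasure M E)"
    proof
      fix E assume E[measurable]: "E \<in> sets M"
      show "emeasure N (\<tau> -` E \<inter> space N) \<le> volume_bound \<Phi> D p (emeasure M E)"
      proof (cases "emeasure M E = 0")
        case True then show ?thesis using ns E by simp
      next
        case m0: False
        show ?thesis
        proof (cases "emeasure M E = top")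
          case True then show ?thesis by (simp add: volume_bound_def)
        next
          case False
          then obtain mr where mr: "emeasure M E = ennreal mr" "0 \<le> mr"
            by (cases "emeasure M E") auto
          have mr0: "0 < mr" using mr m0 by (cases "mr = 0") auto
          define A where "A = mr powr (1 / p)"
          have A0: "0 < A" using mr0 by (simp add: A_def)
          define f where "f = (indicator E :: 'a \<Rightarrow> real)"
          have Lf: "lorentz_norm M p f = ennreal A"
            unfolding f_def A_def by (rule lorentz_indicator[OF E mr])
          have "f \<in> lorentz_space M p" using Lf by (simp add: lorentz_space_def f_def)
          from HC[OF this] have memb: "(f \<circ> \<tau>) \<in> orlicz_space N \<Phi>"
            and nb: "orlicz_norm N \<Phi> (f \<circ> \<tau>) \<le> ennreal C * ennreal A" using Lf by auto
          define F where "F = \<tau> -` E \<inter> space N"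
          have F[measurable]: "F \<in> sets N" unfolding F_def by measurable
          have gF: "\<And>c. (\<integral>\<^sup>+y. ennreal (\<Phi> (c * \<bar>(f \<circ> \<tau>) y\<bar>)) \<partial>N) = ennreal (\<Phi> c) * emeasure N F"
          proof -
            fix c
            have "(\<integral>\<^sup>+y. ennreal (\<Phi> (c * \<bar>(f \<circ> \<tau>) y\<bar>)) \<partial>N) = (\<integral>\<^sup>+y. ennreal (\<Phi> c) * indicator F y \<partial>N)"
              using young_zero[OF Y] by (intro nn_integral_cong) (auto simp: f_def F_def indicator_def)
            then show "(\<integral>\<^sup>+y. ennreal (\<Phi> (c * \<bar>(f \<circ> \<tau>) y\<bar>)) \<partial>N) = ennreal (\<Phi> c) * emeasure N F"
              by (simp add: nn_integral_cmult_indicator)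
          qed
          have "\<forall>\<epsilon>>0. (\<integral>\<^sup>+y. ennreal (\<Phi> (\<epsilon> * \<bar>(f \<circ> \<tau>) y\<bar>)) \<partial>N) < top"
            using memb by (simp add: orlicz_space_def)
          note this[rule_format, OF zero_less_one]
          then have "(\<integral>\<^sup>+y. ennreal (\<Phi> (1 * \<bar>(f \<circ> \<tau>) y\<bar>)) \<partial>N) < top" .
          then have "ennreal (\<Phi> 1) * emeasure N F < top" by (simp only: gF)
          moreover have "0 < \<Phi> 1" using young_pos[OF Y] by simp
          ultimately have Ffin: "emeasure N F < top"
            by (auto simp: ennreal_mult_eq_top_iff less_top[symmetric])
          then obtain nr where nr: "emeasure N F = ennreal nr" "0 \<le> nr"
            by (cases "emeasure N F") auto
          have "ennreal nr \<le> ennreal (1 / \<Phi> (1 / (D * A)))"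
          proof (cases "nr = 0")
            case True then show ?thesis by simp
          next
            case False
            then have nr0: "0 < nr" using nr by simp
            have "orlicz_norm N \<Phi> (f \<circ> \<tau>) < ennreal (D * A)"
            proof -
              have "C * A < D * A" using DC A0 by simp
              then have "ennreal C * ennreal A < ennreal (D * A)"
                using C A0 by (simp add: ennreal_mult''[symmetric] ennreal_less_iff)
              with nb show ?thesis by (rule le_less_trans)
            qed
            then obtain lam where lam: "0 < lam" "(\<integral>\<^sup>+ y. ennreal (\<Phi> (\<bar>(f \<circ> \<tau>) y\<bar> / lam)) \<partial>N) \<le> 1"
              "ennreal lam < ennreal (D * A)"
              unfolding orlicz_norm_def Inf_less_iff by auto
            have "0 \<le> D * A" using D1 A0 by simp
            then have lamDA: "lam < D * A" using lam(3) lam(1) ennreal_less_iff[of lam "D * A"] by simp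
            have "(\<integral>\<^sup>+ y. ennreal (\<Phi> (\<bar>(f \<circ> \<tau>) y\<bar> / lam)) \<partial>N)
                = (\<integral>\<^sup>+ y. ennreal (\<Phi> ((1 / lam) * \<bar>(f \<circ> \<tau>) y\<bar>)) \<partial>N)" by simp
            also have "\<dots> = ennreal (\<Phi> (1 / lam)) * ennreal nr" using gF[of "1 / lam"] nr(1) by simp
            finally have le1: "ennreal (\<Phi> (1 / lam)) * ennreal nr \<le> 1" using lam(2) by simp
            have x0: "0 < 1 / (D * A)" using D1 A0 by simp
            have xl: "1 / (D * A) \<le> 1 / lam"
              by (rule divide_left_mono) (use lamDA lam(1) x0 D1 A0 in auto)
            have Pmono: "\<Phi> (1 / (D * A)) \<le> \<Phi> (1 / lam)"
              by (rule young_mono[OF Y _ xl]) (use x0 in simp)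
            have Pl0: "0 \<le> \<Phi> (1 / lam)" using young_nonneg[OF Y, of "1/lam"] lam(1) by simp
            have "ennreal (\<Phi> (1 / lam) * nr) \<le> 1"
              using le1 Pl0 nr(2) by (subst ennreal_mult) auto
            then have "\<Phi> (1 / lam) * nr \<le> 1" by (simp add: ennreal_le_1)
            moreover have "\<Phi> (1 / (D * A)) * nr \<le> \<Phi> (1 / lam) * nr"
              using mult_right_mono[OF Pmono nr(2)] .
            ultimately have "\<Phi> (1 / (D * A)) * nr \<le> 1" by linarith
            then have "nr \<le> 1 / \<Phi> (1 / (D * A))"
              using pos_le_divide_eq[OF young_pos[OF Y x0]] by (simp add: mult.commute)
            then show ?thesis by (rule ennreal_leI)
          qed
          moreover have "volume_bound \<Phi> D p (emeasure M E) = ennreal (1 / \<Phi> (1 / (D * A)))"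
            using mr m0 False by (simp add: volume_bound_def A_def)
          ultimately show ?thesis using nr by (simp add: F_def)
        qed
      qed
    qed
    then show "\<exists>D\<ge>1. \<forall>E \<in> sets M.
            emeasure N (\<tau> -` E \<inter> space N) \<le> volume_bound \<Phi> D p (emeasure M E)"
      using D1 by blast
  next
    assume "\<exists>D\<ge>1. \<forall>E \<in> sets M.
            emeasure N (\<tau> -` E \<inter> space N) \<le> volume_bound \<Phi> D p (emeasure M E)"
    then obtain D where D: "1 \<le> D" and vol: "\<forall>E \<in> sets M.
            emeasure N (\<tau> -` E \<inter> space N) \<le> volume_bound \<Phi> D p (emeasure M E)" by blast
    have "\<forall>f \<in> lorentz_space M p.
            (f \<circ> \<tau>) \<in> orlicz_space N \<Phi> \<and>
            orlicz_norm N \<Phi> (f \<circ> \<tau>) \<le> ennreal D * lorentz_norm M p f"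
    proof
      fix f assume "f \<in> lorentz_space M p"
      then have f[measurable]: "f \<in> borel_measurable M" and Lt: "lorentz_norm M p f < top"
        by (auto simp: lorentz_space_def)
      have "(f \<circ> \<tau>) \<in> orlicz_space N \<Phi>"
        unfolding orlicz_space_def
      proof (intro CollectI conjI allI impI)
        show "f \<circ> \<tau> \<in> borel_measurable N" by (simp add: comp_def)
        fix \<epsilon> :: real assume "0 < \<epsilon>"
        then show "(\<integral>\<^sup>+ y. ennreal (\<Phi> (\<epsilon> * \<bar>(f \<circ> \<tau>) y\<bar>)) \<partial>N) < top"
          using choice2[OF SM SN tau ns p Y vol D f Lt] by (simp add: comp_def)
      qed
      moreover
      obtain l where l: "lorentz_norm M p f = ennreal l" "0 \<le> l"
        using Lt by (cases "lorentz_norm M p f") auto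
      have "orlicz_norm N \<Phi> (f \<circ> \<tau>) \<le> ennreal (D * l)"
      proof (rule orlicz_le)
        show "0 \<le> D * l" using D l by simp
        fix r assume r: "D * l < r"
        show "(\<integral>\<^sup>+y. ennreal (\<Phi> (\<bar>(f \<circ> \<tau>) y\<bar> / r)) \<partial>N) \<le> 1"
        proof (cases "l = 0")
          case False
          then have "0 < l" using l by simp
          from choice1[OF SM SN tau ns p Y vol D f l(1) this] r
          show ?thesis by (simp add: comp_def)
        next
          case True
          have "AE y in N. f (\<tau> y) = 0"
            by (rule zero_case[OF SM tau ns p f]) (use l True in simp)
          then have "(\<integral>\<^sup>+y. ennreal (\<Phi> (\<bar>(f \<circ> \<tau>) y\<bar> / r)) \<partial>N) = (\<integral>\<^sup>+y. 0 \<partial>N)"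
            by (intro nn_integral_cong_AE) (auto elim!: eventually_mono simp: young_zero[OF Y])
          then show ?thesis by simp
        qed
      qed
      then have "orlicz_norm N \<Phi> (f \<circ> \<tau>) \<le> ennreal D * lorentz_norm M p f"
        using l D by (simp add: ennreal_mult)
      ultimately show "(f \<circ> \<tau>) \<in> orlicz_space N \<Phi> \<and>
            orlicz_norm N \<Phi> (f \<circ> \<tau>) \<le> ennreal D * lorentz_norm M p f" by blast
    qed
    then show "\<exists>C>0. \<forall>f \<in> lorentz_space M p.
            (f \<circ> \<tau>) \<in> orlicz_space N \<Phi> \<and>
            orlicz_norm N \<Phi> (f \<circ> \<tau>) \<le> ennreal C * lorentz_norm M p f"
      using D by (intro exI[of _ D]) auto
  qed
qed

end
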